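(* Let $\{|0\rangle,|1\rangle,|2\rangle\}$ be the computational basis of $\mathbb{C}^3$, $P_k=|k\rangle\langle k|$, and define on $\mathbb{C}^3\otimes\mathbb{C}^3$: $Q=I\otimes I-\sum_{k=0}^{2}P_k\otimes P_k-P_2\otimes P_0$, $|\Psi\rangle=\frac{1}{\sqrt3}(|00\rangle+|11\rangle+|22\rangle)$, $\rho_{ent}=\frac38|\Psi\rangle\langle\Psi|+\frac18 Q$, $|\Phi_a\rangle=|2\rangle\otimes\big(\sqrt{\tfrac{1+a}{2}}|0\rangle+\sqrt{\tfrac{1-a}{2}}|2\rangle\big)$ and $\rho_a=\frac{8a}{8a+1}\rho_{ent}+\frac{1}{8a+1}|\Phi_a\rangle\langle\Phi_a|$. Then for every $0<a<1$, $$d_{\max}(\rho_a)=\frac{2\sqrt2\,a}{8a+1},$$ and this value is attained, for example, by any diagonal unitary $U^B\in\mathbb{C}^{3\times3}$ with $U^B_{0,0}=-U^B_{1,1}=U^B_{2,2}$.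
   Context: For a state $\rho$ on $\mathbb{C}^M\otimes\mathbb{C}^N$ let $\rho_B=\mathrm{Tr}_A(\rho)$. A unitary $U^B$ on $\mathbb{C}^N$ is called cyclic for $\rho$ if $[\rho_B,U^B]=0$. Set $\rho_f=(I\otimes U^B)\rho(I\otimes U^{B\dagger})$ and define the Fu distance $d(\rho,U^B)=\frac{1}{\sqrt2}\|\rho-\rho_f\|_F$ (Frobenius norm $\|X\|_F=\sqrt{\mathrm{Tr}(X^\dagger X)}$). Define $d_{\max}(\rho)=\max\{d(\rho,U^B): U^B\text{ unitary},\ [\rho_B,U^B]=0\}$. *)

theory Defs
  imports "HOL-Analysis.Analysis"
begin

text \<open>Matrices on C^M (x) C^N are indexed by pairs (i,j): the basis vector |i>|j>.
  Operators are complex^('m::finite \<times> 'n::finite)^('m::finite \<times> 'n::finite).\<close>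

definition cadj :: "complex^'n::finite^'m::finite \<Rightarrow> complex^'m::finite^'n::finite" where
  "cadj A = (\<chi> i j. cnj (A $ j $ i))"

definition unitary :: "complex^'n::finite^'n \<Rightarrow> bool" where
  "unitary U \<longleftrightarrow> U ** cadj U = mat 1 \<and> cadj U ** U = mat 1"

definition ptraceA :: "complex^('m::finite \<times> 'n::finite)^('m::finite \<times> 'n::finite) \<Rightarrow> complex^'n::finite^'n" where
  "ptraceA \<rho> = (\<chi> j j'. \<Sum>i\<in>UNIV. \<rho> $ (i, j) $ (i, j'))"

definition idtensor :: "complex^'n::finite^'n \<Rightarrow> complex^('m::finite \<times> 'n::finite)^('m::finite \<times> 'n::finite)" where
  "idtensor U = (\<chi> p q. if fst p = fst q then U $ snd p $ snd q else 0)"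

definition frob :: "complex^'n::finite^'m::finite \<Rightarrow> real" where
  "frob X = sqrt (\<Sum>i\<in>UNIV. \<Sum>j\<in>UNIV. (cmod (X $ i $ j))\<^sup>2)"

definition cyclic :: "complex^('m::finite \<times> 'n::finite)^('m::finite \<times> 'n::finite) \<Rightarrow> complex^'n::finite^'n \<Rightarrow> bool" where
  "cyclic \<rho> U \<longleftrightarrow> unitary U \<and> ptraceA \<rho> ** U = U ** ptraceA \<rho>"

definition rho_f :: "complex^('m::finite \<times> 'n::finite)^('m::finite \<times> 'n::finite) \<Rightarrow> complex^'n::finite^'n \<Rightarrow> complex^('m::finite \<times> 'n::finite)^('m::finite \<times> 'n::finite)" where
  "rho_f \<rho> U = idtensor U ** \<rho> ** cadj (idtensor U)"

definition fu_dist :: "complex^('m::finite \<times> 'n::finite)^('m::finite \<times> 'n::finite) \<Rightarrow> complex^'n::finite^'n \<Rightarrow> real" where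
  "fu_dist \<rho> U = frob (\<rho> - rho_f \<rho> U) / sqrt 2"

definition dmax :: "complex^('m::finite \<times> 'n::finite)^('m::finite \<times> 'n::finite) \<Rightarrow> real" where
  "dmax \<rho> = Sup {fu_dist \<rho> U | U. cyclic \<rho> U}"

definition proj :: "3 \<Rightarrow> complex^3^3" where
  "proj k = (\<chi> i j. if i = k \<and> j = k then 1 else 0)"

definition tensor :: "complex^'m::finite^'m \<Rightarrow> complex^'n::finite^'n \<Rightarrow> complex^('m::finite \<times> 'n::finite)^('m::finite \<times> 'n::finite)" where
  "tensor A B = (\<chi> p q. A $ fst p $ fst q * B $ snd p $ snd q)"

definition outer :: "complex^'n::finite \<Rightarrow> complex^'n::finite^'n" where
  "outer v = (\<chi> i j. v $ i * cnj (v $ j))"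

definition Qop :: "complex^(3 \<times> 3)^(3 \<times> 3)" where
  "Qop = mat 1 - (\<Sum>k\<in>UNIV. tensor (proj k) (proj k)) - tensor (proj 2) (proj 0)"

definition Psi :: "complex^(3 \<times> 3)" where
  "Psi = (\<chi> p. if fst p = snd p then complex_of_real (1 / sqrt 3) else 0)"

definition rho_ent :: "complex^(3 \<times> 3)^(3 \<times> 3)" where
  "rho_ent = (3/8) *\<^sub>R outer Psi + (1/8) *\<^sub>R Qop"

definition Phi :: "real \<Rightarrow> complex^(3 \<times> 3)" where
  "Phi a = (\<chi> p. if fst p = 2 then
      (if snd p = 0 then complex_of_real (sqrt ((1 + a) / 2))
       else if snd p = 2 then complex_of_real (sqrt ((1 - a) / 2)) else 0)
     else 0)"

definition rho_a :: "real \<Rightarrow> complex^(3 \<times> 3)^(3 \<times> 3)" where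
  "rho_a a = (8 * a / (8 * a + 1)) *\<^sub>R rho_ent + (1 / (8 * a + 1)) *\<^sub>R outer (Phi a)"

end

theory Submission imports Defs begin
lemma UNIV3: "(UNIV::3 set) = {0,1,2}"
  unfolding UNIV_3 by auto
lemma ex3: "(x::3) = 0 \<or> x = 1 \<or> x = 2"
  using UNIV3 by blast
lemma sum3: "sum f (UNIV::3 set) = f 0 + f 1 + f 2"
  unfolding UNIV3 by (simp add: add.assoc)
lemma sumP: "sum f (UNIV::('a::finite\<times>'b::finite) set) = (\<Sum>i\<in>UNIV. \<Sum>j\<in>UNIV. f (i,j))"
  by (simp add: sum.cartesian_product UNIV_Times_UNIV[symmetric] del: UNIV_Times_UNIV)
lemma sum_delta2: "(\<Sum>ia\<in>(UNIV::'a::finite set). \<Sum>ja\<in>UNIV. (if i = ia then g ia ja else 0)) = (\<Sum>ja\<in>UNIV. g i ja)"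
proof -
  have e: "(\<Sum>ja\<in>UNIV. if i=ia then g ia ja else 0) = (if i = ia then \<Sum>ja\<in>UNIV. g ia ja else 0)" for ia
    by simp
  show ?thesis by (simp only: e) simp
qed

lemma rho_f_entry: "rho_f \<rho> U $ (i,j) $ (i',j') = (\<Sum>k\<in>UNIV. \<Sum>k'\<in>UNIV. U$j$k * \<rho>$(i,k)$(i',k') * cnj (U$j'$k'))"
proof -
  have 1: "(idtensor U ** \<rho>) $ (i,j) $ q = (\<Sum>k\<in>UNIV. U$j$k * \<rho>$(i,k)$q)" for q
  proof -
    have "(idtensor U ** \<rho>) $ (i,j) $ q = (\<Sum>ia\<in>UNIV. \<Sum>ja\<in>UNIV. (if i = ia then U$j$ja * \<rho>$(ia,ja)$q else 0))"
      unfolding matrix_matrix_mult_def idtensor_def by (simp add: sumP; intro sum.cong; simp)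
    thus ?thesis by (simp only: sum_delta2)
  qed
  have "rho_f \<rho> U $ (i,j) $ (i',j') = (\<Sum>ia\<in>UNIV. \<Sum>ja\<in>UNIV. (if i' = ia then (\<Sum>k\<in>UNIV. U$j$k * \<rho>$(i,k)$(ia,ja)) * cnj (U$j'$ja) else 0))"
    unfolding rho_f_def matrix_matrix_mult_def[of "idtensor U ** \<rho>"]
    apply (simp only: sumP 1 cadj_def vec_lambda_beta)
    by (simp add: idtensor_def; intro sum.cong; simp)
  also have "\<dots> = (\<Sum>k'\<in>UNIV. (\<Sum>k\<in>UNIV. U$j$k * \<rho>$(i,k)$(i',k')) * cnj (U$j'$k'))"
    by (simp only: sum_delta2)
  also have "\<dots> = (\<Sum>k\<in>UNIV. \<Sum>k'\<in>UNIV. U$j$k * \<rho>$(i,k)$(i',k') * cnj (U$j'$k'))"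
    by (simp add: sum_distrib_right; rule sum.swap)
  finally show ?thesis .
qed
lemma rho_a_entry: "rho_a a $ (i,j) $ (i',j') = complex_of_real (1/(8*a+1)) * (complex_of_real a * (if i = j \<and> i' = j' then 1 else 0)
   + complex_of_real a * (if i = i' \<and> j = j' \<and> i \<noteq> j \<and> \<not> (i = 2 \<and> j = 0) then 1 else 0) + Phi a $ (i,j) * cnj (Phi a $ (i',j')))"
proof -
  have ps: "Psi $ (i,j) * cnj (Psi $ (i',j')) = (if i = j \<and> i' = j' then 1/3 else 0)"
  proof -
    have "complex_of_real (1 / sqrt 3) * complex_of_real (1 / sqrt 3) = 1/3"
      by (simp flip: of_real_mult)
    thus ?thesis unfolding Psi_def by simp
  qed
  have q: "Qop $ (i,j) $ (i',j') = (if i = i' \<and> j = j' \<and> i \<noteq> j \<and> \<not> (i = 2 \<and> j = 0) then 1 else 0)"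
    unfolding Qop_def using ex3[of j'] ex3[of i'] by (simp add: sum_component sum3 mat_def tensor_def proj_def) blast
  have r: "rho_a a = (1/(8*a+1)) *\<^sub>R ((8*a) *\<^sub>R rho_ent + outer (Phi a))"
    unfolding rho_a_def by (simp add: scaleR_add_right)
  show ?thesis
    unfolding r rho_ent_def
    apply (simp add: outer_def ps q vector_scaleR_component)
    apply (simp add: scaleR_conv_of_real algebra_simps add_divide_distrib)
    done
qed
lemma frob_c: "complex_of_real ((frob X)^2) = (\<Sum>i\<in>UNIV. \<Sum>j\<in>UNIV. X$i$j * cnj (X$i$j))"
proof -
  have "(frob X)^2 = (\<Sum>i\<in>UNIV. \<Sum>j\<in>UNIV. (cmod (X $ i $ j))\<^sup>2)"
    unfolding frob_def by (simp add: sum_nonneg)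
  thus ?thesis by (simp only: of_real_sum complex_norm_square)
qed

lemma Phi_entries: "Phi a $ (0,j) = 0" "Phi a $ (1,j) = 0" "Phi a $ (2,1) = 0"
  "Phi a $ (2,0) = complex_of_real (sqrt ((1 + a) / 2))" "Phi a $ (2,2) = complex_of_real (sqrt ((1 - a) / 2))"
  unfolding Phi_def by simp_all

lemma frob_generic:
  fixes U :: "complex^3^3" and R :: "complex^(3\<times>3)^(3\<times>3)" and ph :: "3\<times>3 \<Rightarrow> complex"
  assumes R: "\<And>i j i' j'. R $ (i,j) $ (i',j') = w * (A * (if i = j \<and> i' = j' then 1 else 0)
   + A * (if i = i' \<and> j = j' \<and> i \<noteq> j \<and> \<not> (i = 2 \<and> j = 0) then 1 else 0) + ph (i,j) * cnj (ph (i',j')))"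
  and ph: "\<And>j. ph (0,j) = 0" "\<And>j. ph (1,j) = 0" "ph (2,1) = 0" "ph (2,0) = al" "ph (2,2) = be"
  and cj: "cnj w = w" "cnj A = A" "cnj al = al" "cnj be = be"
  and z: "U$0$1 = 0" "U$2$1 = 0" "U$1$0 = 0" "U$1$2 = 0" and s: "U$2$0 = U$0$2" "U$2$2 = U$0$0"
  and r1: "U$0$0 * cnj (U$0$0) + U$0$2 * cnj (U$0$2) = 1" and r2: "U$0$0 * cnj (U$0$2) + U$0$2 * cnj (U$0$0) = 0"
  and r3: "U$1$1 * cnj (U$1$1) = 1"
  and al: "al * al = A + be * be"
  shows "complex_of_real ((frob (R - rho_f R U))^2) = w^2 * A^2 * (12 - 4*(U$0$0*cnj (U$1$1) + cnj (U$0$0) * U$1$1) - 4 * U$0$0 * cnj (U$0$0))"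
  using r1 r2 r3 al
  apply (simp only: frob_c sumP sum3 vector_minus_component rho_f_entry R z s)
  apply (simp add: ph cj)
  by algebra
lemma forall3: "(\<forall>i::3. P i) \<longleftrightarrow> P 0 \<and> P 1 \<and> P 2"
  using ex3 by metis

lemma mat_eq3: "(A::'a^3^3) = B \<longleftrightarrow> (\<forall>i j. A$i$j = B$i$j)"
  by (simp add: vec_eq_iff)

lemma mult3: "((A::'a::semiring_1^3^3) ** B) $ i $ k = A$i$0 * B$0$k + A$i$1 * B$1$k + A$i$2 * B$2$k"
  by (simp add: matrix_matrix_mult_def sum3)

lemma comm_struct:
  fixes U B :: "complex^3^3"
  assumes B: "B$0$0 = p" "B$2$2 = p" "B$1$1 = r" "B$0$2 = q" "B$2$0 = q" "B$0$1 = 0" "B$1$0 = 0" "B$1$2 = 0" "B$2$1 = 0"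
  and q: "q \<noteq> 0" and pq: "(p-r)^2 - q^2 \<noteq> 0" and c: "B ** U = U ** B"
  shows "U$0$1 = 0" "U$2$1 = 0" "U$1$0 = 0" "U$1$2 = 0" "U$2$0 = U$0$2" "U$2$2 = U$0$0"
proof -
  have e: "(B ** U) $ i $ k = (U ** B) $ i $ k" for i k using c by simp
  note e01 = e[of 0 1, unfolded mult3 B] and e21 = e[of 2 1, unfolded mult3 B]
   and e10 = e[of 1 0, unfolded mult3 B] and e12 = e[of 1 2, unfolded mult3 B]
   and e00 = e[of 0 0, unfolded mult3 B] and e02 = e[of 0 2, unfolded mult3 B]
  have "((p-r)^2 - q^2) * U$0$1 = 0" using e01 e21 by algebra
  thus "U$0$1 = 0" using pq by simp
  have "((p-r)^2 - q^2) * U$2$1 = 0" using e01 e21 by algebra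
  thus "U$2$1 = 0" using pq by simp
  have "((p-r)^2 - q^2) * U$1$0 = 0" using e10 e12 by algebra
  thus "U$1$0 = 0" using pq by simp
  have "((p-r)^2 - q^2) * U$1$2 = 0" using e10 e12 by algebra
  thus "U$1$2 = 0" using pq by simp
  have "q * (U$2$0 - U$0$2) = 0" using e00 by algebra
  thus "U$2$0 = U$0$2" using q by simp
  have "q * (U$2$2 - U$0$0) = 0" using e02 by algebra
  thus "U$2$2 = U$0$0" using q by simp
qed

lemma ptr_entries:
  fixes a :: real
  defines "w \<equiv> complex_of_real (1/(8*a+1))" and "A \<equiv> complex_of_real a"
    and "al \<equiv> complex_of_real (sqrt ((1 + a) / 2))" and "be \<equiv> complex_of_real (sqrt ((1 - a) / 2))"
  shows "ptraceA (rho_a a) $ 0 $ 0 = w * (2*A + al*al)" "ptraceA (rho_a a) $ 1 $ 1 = w * (3*A)"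
   "ptraceA (rho_a a) $ 2 $ 2 = w * (3*A + be*be)" "ptraceA (rho_a a) $ 0 $ 2 = w * (al*be)"
   "ptraceA (rho_a a) $ 2 $ 0 = w * (al*be)" "ptraceA (rho_a a) $ 0 $ 1 = 0" "ptraceA (rho_a a) $ 1 $ 0 = 0"
   "ptraceA (rho_a a) $ 1 $ 2 = 0" "ptraceA (rho_a a) $ 2 $ 1 = 0"
  unfolding ptraceA_def w_def A_def al_def be_def
  by (simp_all add: sum3 rho_a_entry Phi_entries algebra_simps)
lemma unit_entries:
  fixes U :: "complex^3^3"
  assumes "unitary U"
  shows "U$i$0 * cnj (U$j$0) + U$i$1 * cnj (U$j$1) + U$i$2 * cnj (U$j$2) = (if i = j then 1 else 0)"
proof -
  have "(U ** cadj U) $ i $ j = mat 1 $ i $ j" using assms unfolding unitary_def by simp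
  thus ?thesis by (simp add: mult3 cadj_def mat_def)
qed

lemma sq_facts:
  fixes a :: real assumes "0 < a" "a < 1"
  shows "sqrt ((1 + a) / 2) * sqrt ((1 + a) / 2) = (1 + a) / 2" "sqrt ((1 - a) / 2) * sqrt ((1 - a) / 2) = (1 - a) / 2"
    "sqrt ((1 + a) / 2) > 0" "sqrt ((1 - a) / 2) > 0"
  using assms by auto

lemma main_formula:
  fixes U :: "complex^3^3" and a :: real
  assumes a: "0 < a" "a < 1" and u: "unitary U"
  and z: "U$0$1 = 0" "U$2$1 = 0" "U$1$0 = 0" "U$1$2 = 0" and s: "U$2$0 = U$0$2" "U$2$2 = U$0$0"
  shows "(frob (rho_a a - rho_f (rho_a a) U))^2 = (a/(8*a+1))^2 * (12 - 8*Re(U$0$0 * cnj (U$1$1)) - 4*(cmod (U$0$0))^2)"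
    and "U$0$0 * cnj (U$0$0) + U$0$2 * cnj (U$0$2) = 1" "U$1$1 * cnj (U$1$1) = 1"
proof -
  note ue = unit_entries[OF u]
  show r1: "U$0$0 * cnj (U$0$0) + U$0$2 * cnj (U$0$2) = 1" using ue[of 0 0] z by simp
  have r2: "U$0$0 * cnj (U$0$2) + U$0$2 * cnj (U$0$0) = 0" using ue[of 0 2] z s by simp
  show r3: "U$1$1 * cnj (U$1$1) = 1" using ue[of 1 1] z by simp
  note sf = sq_facts[OF a]
  have al: "complex_of_real (sqrt ((1 + a) / 2)) * complex_of_real (sqrt ((1 + a) / 2)) = complex_of_real a + complex_of_real (sqrt ((1 - a) / 2)) * complex_of_real (sqrt ((1 - a) / 2))"
    by (simp only: of_real_mult[symmetric] sf of_real_add[symmetric]) (simp add: field_simps)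
  have F: "complex_of_real ((frob (rho_a a - rho_f (rho_a a) U))^2) = (complex_of_real (1/(8*a+1)))^2 * (complex_of_real a)^2 * (12 - 4*(U$0$0*cnj (U$1$1) + cnj (U$0$0) * U$1$1) - 4 * U$0$0 * cnj (U$0$0))"
    by (rule frob_generic[where ph = "\<lambda>p. Phi a $ p", OF rho_a_entry[of a] Phi_entries[of a] _ _ _ _ z s r1 r2 r3 al]) simp_all
  have c1: "U$0$0*cnj (U$1$1) + cnj (U$0$0) * U$1$1 = complex_of_real (2 * Re (U$0$0 * cnj (U$1$1)))"
    using complex_add_cnj[of "U$0$0 * cnj (U$1$1)"] by (simp add: mult.commute)
  have c2: "U$0$0 * cnj (U$0$0) = complex_of_real ((cmod (U$0$0))^2)" by (rule complex_norm_square[symmetric])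
  have "complex_of_real ((frob (rho_a a - rho_f (rho_a a) U))^2) = complex_of_real ((a/(8*a+1))^2 * (12 - 8*Re(U$0$0 * cnj (U$1$1)) - 4*(cmod (U$0$0))^2))"
    unfolding F mult.assoc[of 4 "U$0$0"] c1 c2 by (simp add: power_divide)
  thus "(frob (rho_a a - rho_f (rho_a a) U))^2 = (a/(8*a+1))^2 * (12 - 8*Re(U$0$0 * cnj (U$1$1)) - 4*(cmod (U$0$0))^2)"
    by (simp only: of_real_eq_iff)
qed
theorem theorem5:
  fixes a :: real
  assumes "0 < a" and "a < 1"
  shows "dmax (rho_a a) = 2 * sqrt 2 * a / (8 * a + 1)
    \<and> (\<forall>U :: complex^3^3. unitary U \<and> (\<forall>i j. i \<noteq> j \<longrightarrow> U $ i $ j = 0)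
          \<and> U $ 0 $ 0 = - U $ 1 $ 1 \<and> U $ 0 $ 0 = U $ 2 $ 2
        \<longrightarrow> cyclic (rho_a a) U \<and> fu_dist (rho_a a) U = 2 * sqrt 2 * a / (8 * a + 1))"
proof -
  note a = assms
  define w where "w = complex_of_real (1/(8*a+1))"
  define A where "A = complex_of_real a"
  define al where "al = complex_of_real (sqrt ((1 + a) / 2))"
  define be where "be = complex_of_real (sqrt ((1 - a) / 2))"
  define B where "B = ptraceA (rho_a a)"
  note pe = ptr_entries[of a, folded w_def A_def al_def be_def B_def]
  note sf = sq_facts[OF a]
  have alr: "al * al = A + be * be" unfolding al_def be_def A_def
    by (simp only: of_real_mult[symmetric] sf of_real_add[symmetric]) (simp add: field_simps)
  have c0: "8*a+1 > 0" using a by simp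
  have wnz: "w \<noteq> 0" unfolding w_def of_real_eq_0_iff using c0 by simp
  have Anz: "A \<noteq> 0" unfolding A_def using a by simp
  have alnz: "al \<noteq> 0" unfolding al_def using sf by simp
  have benz: "be \<noteq> 0" unfolding be_def using sf by simp
  have B22: "B$2$2 = w * (2*A + al*al)" using pe(3) alr by (simp add: algebra_simps)
  have pqr: "(w * (2*A + al*al) - w*(3*A))^2 - (w*(al*be))^2 = - (w^2*be^2*A)"
    using alr by algebra
  have pqnz: "(w * (2*A + al*al) - w*(3*A))^2 - (w*(al*be))^2 \<noteq> 0"
    unfolding pqr using wnz benz Anz by simp
  have qnz: "w*(al*be) \<noteq> 0" using wnz alnz benz by simp
  have struct: "U$0$1 = 0 \<and> U$2$1 = 0 \<and> U$1$0 = 0 \<and> U$1$2 = 0 \<and> U$2$0 = U$0$2 \<and> U$2$2 = U$0$0"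
    if "cyclic (rho_a a) U" for U :: "complex^3^3"
  proof -
    have c: "B ** U = U ** B" using that unfolding cyclic_def B_def by simp
    show ?thesis using comm_struct[OF pe(1) B22 pe(2) pe(4) pe(5) pe(6) pe(7) pe(8) pe(9) qnz pqnz c] by simp
  qed
  let ?b = "2 * sqrt 2 * a / (8 * a + 1)"
  have s2: "sqrt 2 * sqrt 2 = (2::real)" by simp
  have s4: "(4::real) / sqrt 2 = 2 * sqrt 2" by (simp add: field_simps)
  have conv: "4 * (a/(8*a+1)) / sqrt 2 = ?b"
  proof -
    have "4 * (a/(8*a+1)) / sqrt 2 = (4 / sqrt 2) * (a/(8*a+1))" by (simp only: times_divide_eq_left)
    also have "\<dots> = ?b" unfolding s4 times_divide_eq_right by simp
    finally show ?thesis .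
  qed
  have g0: "4 * (a/(8*a+1)) \<ge> 0" using a c0 by simp
  have f0: "frob X \<ge> 0" for X :: "complex^(3\<times>3)^(3\<times>3)" unfolding frob_def by (simp add: sum_nonneg)
  have sq16: "(4 * (a/(8*a+1)))^2 = 16 * (a/(8*a+1))^2" unfolding power_mult_distrib by simp
  have fu: "fu_dist (rho_a a) U = ?b" if "(frob (rho_a a - rho_f (rho_a a) U))^2 = 16 * (a/(8*a+1))^2" for U
  proof -
    have "(frob (rho_a a - rho_f (rho_a a) U))^2 = (4 * (a/(8*a+1)))^2" using that sq16 by simp
    hence "frob (rho_a a - rho_f (rho_a a) U) = 4 * (a/(8*a+1))" using power2_eq_iff_nonneg[OF f0 g0] by simp
    thus ?thesis unfolding fu_dist_def conv[symmetric] by simp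
  qed
  have ub: "fu_dist (rho_a a) U \<le> ?b" if "cyclic (rho_a a) U" for U
  proof -
    have u: "unitary U" using that unfolding cyclic_def by simp
    have zz: "U$0$1 = 0" "U$2$1 = 0" "U$1$0 = 0" "U$1$2 = 0" "U$2$0 = U$0$2" "U$2$2 = U$0$0"
      using struct[OF that] by auto
    note M = main_formula[OF a u zz]
    have zn: "cmod (U$1$1) = 1"
    proof -
      have "complex_of_real ((cmod (U$1$1))^2) = 1" using M(3) by (simp only: complex_norm_square)
      hence "(cmod (U$1$1))^2 = 1" by (simp only: of_real_eq_1_iff)
      thus ?thesis using norm_ge_zero[of "U$1$1"] by (simp add: power2_eq_1_iff)
    qed
    have re: "Re (U$0$0 * cnj (U$1$1)) \<ge> - cmod (U$0$0)"
    proof -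
      have "\<bar>Re (U$0$0 * cnj (U$1$1))\<bar> \<le> cmod (U$0$0 * cnj (U$1$1))" by (rule abs_Re_le_cmod)
      also have "\<dots> = cmod (U$0$0)" using zn by (simp add: norm_mult)
      finally show ?thesis by linarith
    qed
    have E: "12 - 8*Re(U$0$0 * cnj (U$1$1)) - 4*(cmod (U$0$0))^2 \<le> 16"
    proof -
      have "0 \<le> (cmod (U$0$0) - 1)^2" by simp
      moreover have "(cmod (U$0$0) - 1)^2 = (cmod (U$0$0))^2 - 2 * cmod (U$0$0) + 1" by (simp add: power2_diff)
      ultimately show ?thesis using re by linarith
    qed
    have "(frob (rho_a a - rho_f (rho_a a) U))^2 \<le> (a/(8*a+1))^2 * 16"
      unfolding M(1) by (rule mult_left_mono[OF E]) simp
    also have "\<dots> = (4 * (a/(8*a+1)))^2" using sq16 by simp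
    finally have "frob (rho_a a - rho_f (rho_a a) U) \<le> 4 * (a/(8*a+1))"
      using g0 by (rule power2_le_imp_le)
    hence "frob (rho_a a - rho_f (rho_a a) U) / sqrt 2 \<le> 4 * (a/(8*a+1)) / sqrt 2"
      by (rule divide_right_mono) simp
    thus ?thesis unfolding fu_dist_def conv .
  qed
  have diag: "cyclic (rho_a a) U \<and> fu_dist (rho_a a) U = ?b"
    if u: "unitary U" and off: "\<forall>i j. i \<noteq> j \<longrightarrow> U $ i $ j = 0" and d1: "U $ 0 $ 0 = - U $ 1 $ 1" and d2: "U $ 0 $ 0 = U $ 2 $ 2"
    for U :: "complex^3^3"
  proof -
    have zz: "U$0$1 = 0" "U$2$1 = 0" "U$1$0 = 0" "U$1$2 = 0" "U$2$0 = U$0$2" "U$2$2 = U$0$0" "U$0$2 = 0"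
      using off d2 by auto
    have comm: "B ** U = U ** B"
      unfolding mat_eq3 forall3 mult3 using zz d1 by (simp add: pe B22)
    have cyc: "cyclic (rho_a a) U" unfolding cyclic_def using u comm B_def by simp
    note M = main_formula[OF a u zz(1-6)]
    have x1: "(cmod (U$0$0))^2 = 1"
    proof -
      have "complex_of_real ((cmod (U$0$0))^2) = 1" using M(2) zz(7) by (simp only: complex_norm_square) simp
      thus ?thesis by (simp only: of_real_eq_1_iff)
    qed
    have "Re (U$0$0 * cnj (U$1$1)) = -((cmod (U$0$0))^2)"
    proof -
      have "U$1$1 = - U$0$0" using d1 by simp
      hence "U$0$0 * cnj (U$1$1) = - complex_of_real ((cmod (U$0$0))^2)" by (simp add: complex_norm_square[symmetric] del: of_real_power)
      thus ?thesis by simp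
    qed
    hence "(frob (rho_a a - rho_f (rho_a a) U))^2 = 16 * (a/(8*a+1))^2" unfolding M(1) x1 by simp
    thus ?thesis using cyc fu by simp
  qed
  define U0 :: "complex^3^3" where "U0 = (\<chi> i j. if i = j then (if i = 1 then -1 else 1) else 0)"
  have U0u: "unitary U0" unfolding unitary_def U0_def
    by (simp add: mat_eq3 forall3 mult3 cadj_def mat_def)
  have U0p: "(\<forall>i j. i \<noteq> j \<longrightarrow> U0 $ i $ j = 0) \<and> U0 $ 0 $ 0 = - U0 $ 1 $ 1 \<and> U0 $ 0 $ 0 = U0 $ 2 $ 2"
    unfolding U0_def by simp
  have "dmax (rho_a a) = ?b"
    unfolding dmax_def
  proof (rule cSup_eq_maximum)
    show "?b \<in> {fu_dist (rho_a a) U |U. cyclic (rho_a a) U}"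
    proof -
      have D: "cyclic (rho_a a) U0 \<and> fu_dist (rho_a a) U0 = ?b" using diag[OF U0u] U0p by blast
      show ?thesis unfolding mem_Collect_eq by (rule exI[where x=U0]) (use D in argo)
    qed
    show "x \<le> ?b" if xin: "x \<in> {fu_dist (rho_a a) U |U. cyclic (rho_a a) U}" for x
    proof -
      obtain U where "x = fu_dist (rho_a a) U" "cyclic (rho_a a) U" using xin by blast
      thus ?thesis using ub by simp
    qed
  qed
  moreover have "\<forall>U :: complex^3^3. unitary U \<and> (\<forall>i j. i \<noteq> j \<longrightarrow> U $ i $ j = 0)
          \<and> U $ 0 $ 0 = - U $ 1 $ 1 \<and> U $ 0 $ 0 = U $ 2 $ 2
        \<longrightarrow> cyclic (rho_a a) U \<and> fu_dist (rho_a a) U = ?b"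
  proof (intro allI impI)
    fix U :: "complex^3^3"
    assume h: "unitary U \<and> (\<forall>i j. i \<noteq> j \<longrightarrow> U $ i $ j = 0) \<and> U $ 0 $ 0 = - U $ 1 $ 1 \<and> U $ 0 $ 0 = U $ 2 $ 2"
    show "cyclic (rho_a a) U \<and> fu_dist (rho_a a) U = ?b"
      using diag[of U] h by argo
  qed
  ultimately show ?thesis by (rule conjI)
qed
end
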